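(* Consider the perturbed federated algorithm described in the context, run with parameter $\beta\in(0,1)$. Then for every round $t\ge 0$ and every local step $k\in\{0,\dots,E\}$, $$\sum_{i=1}^C p_i\,\widetilde{\mathbf{w}}_{t,k}^i=\beta\,\overline{\mathbf{w}}_{t,k}+(1-\beta)\,\overline{\mathbf{w}}_{t,0}.$$
   Context: There are $C$ clients with local objectives $F_i:\mathbb{R}^D\to\mathbb{R}$. Similarity weights $p_{in}\ge 0$ ($i,n\in\{1,\dots,C\}$) are symmetric ($p_{in}=p_{ni}$), satisfy $p_{ii}=0$, and $\sum_{i,n}p_{in}=1$. Set $p_i=\sum_{n=1}^C p_{in}$, which is assumed to be $>0$, so that $\sum_i p_i=1$. The algorithm has a parameter $\beta\in(0,1)$, a number $E\ge1$ of local steps and step sizes $\gamma_t>0$. All clients participate in every round. Given an initial point $\overline{\mathbf{w}}_{0,0}$, set $\mathbf{u}_0^i=\overline{\mathbf{w}}_{0,0}$ for all $i$. In round $t\ge0$, each client sets $\mathbf{w}_{t,0}^i=\overline{\mathbf{w}}_{t,0}$. For $k=0,\dots,E-1$ it forms the perturbed iterate $\widetilde{\mathbf{w}}_{t,k}^i=\beta\mathbf{w}_{t,k}^i+(1-\beta)\mathbf{u}_t^i$ and updates $\mathbf{w}_{t,k+1}^i=\mathbf{w}_{t,k}^i-\gamma_t\,g_i(\widetilde{\mathbf{w}}_{t,k}^i)$, where $g_i(\cdot)$ is a stochastic gradient of $F_i$. The perturbed iterate is defined by the same formula also for $k=E$. The average iterate is $\overline{\mathbf{w}}_{t,k}=\sum_i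 p_i\mathbf{w}_{t,k}^i$, and $\overline{\mathbf{w}}_{t+1,0}=\overline{\mathbf{w}}_{t,E}$. For $t\ge1$, $\mathbf{u}_t^i=\frac{1}{p_i}\sum_{n=1}^C p_{in}\mathbf{w}_{t-1,E}^n$. *)

theory Defs
  imports "HOL-Analysis.Analysis"
begin

end

theory Submission
  imports Defs
begin

theorem lemma1:
  fixes C E :: nat
    and p :: "nat \<Rightarrow> nat \<Rightarrow> real"
    and \<beta> :: real
    and \<gamma> :: "nat \<Rightarrow> real"
    and g :: "nat \<Rightarrow> nat \<Rightarrow> nat \<Rightarrow> real ^ 'd \<Rightarrow> real ^ 'd"
    and w0 :: "real ^ 'd"
    and w :: "nat \<Rightarrow> nat \<Rightarrow> nat \<Rightarrow> real ^ 'd"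
    and u :: "nat \<Rightarrow> nat \<Rightarrow> real ^ 'd"
  assumes p_nonneg: "\<And>i n. i \<in> {1..C} \<Longrightarrow> n \<in> {1..C} \<Longrightarrow> p i n \<ge> 0"
    and p_sym: "\<And>i n. i \<in> {1..C} \<Longrightarrow> n \<in> {1..C} \<Longrightarrow> p i n = p n i"
    and p_diag: "\<And>i. i \<in> {1..C} \<Longrightarrow> p i i = 0"
    and p_sum: "(\<Sum>i=1..C. \<Sum>n=1..C. p i n) = 1"
    and p_pos: "\<And>i. i \<in> {1..C} \<Longrightarrow> (\<Sum>n=1..C. p i n) > 0"
    and beta: "0 < \<beta>" "\<beta> < 1"
    and E: "E \<ge> 1"
    and gamma: "\<And>t. \<gamma> t > 0"
    and u0: "\<And>i. i \<in> {1..C} \<Longrightarrow> u 0 i = w0"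
    and w_init0: "\<And>i. i \<in> {1..C} \<Longrightarrow> w 0 0 i = w0"
    and w_init: "\<And>t i. i \<in> {1..C} \<Longrightarrow>
        w (Suc t) 0 i = (\<Sum>n=1..C. (\<Sum>m=1..C. p n m) *\<^sub>R w t E n)"
    and w_step: "\<And>t k i. i \<in> {1..C} \<Longrightarrow> k < E \<Longrightarrow>
        w t (Suc k) i = w t k i - \<gamma> t *\<^sub>R g t k i (\<beta> *\<^sub>R w t k i + (1 - \<beta>) *\<^sub>R u t i)"
    and u_step: "\<And>t i. i \<in> {1..C} \<Longrightarrow>
        u (Suc t) i = (1 / (\<Sum>n=1..C. p i n)) *\<^sub>R (\<Sum>n=1..C. p i n *\<^sub>R w t E n)"
  shows "\<forall>t k. k \<le> E \<longrightarrow>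
      (\<Sum>i=1..C. (\<Sum>n=1..C. p i n) *\<^sub>R (\<beta> *\<^sub>R w t k i + (1 - \<beta>) *\<^sub>R u t i))
      = \<beta> *\<^sub>R (\<Sum>i=1..C. (\<Sum>n=1..C. p i n) *\<^sub>R w t k i)
        + (1 - \<beta>) *\<^sub>R (\<Sum>i=1..C. (\<Sum>n=1..C. p i n) *\<^sub>R w t 0 i)"
proof -
  define P where "P i = (\<Sum>n=1..C. p i n)" for i
  have key: "(\<Sum>i=1..C. P i *\<^sub>R u t i) = (\<Sum>i=1..C. P i *\<^sub>R w t 0 i)" for t
  proof (cases t)
    case 0
    then show ?thesis using u0 w_init0 by (auto intro: sum.cong)
  next
    case (Suc s)
    have "(\<Sum>i=1..C. P i *\<^sub>R u t i) = (\<Sum>i=1..C. \<Sum>n=1..C. p i n *\<^sub>R w s E n)"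
      unfolding Suc P_def
    proof (intro sum.cong refl)
      fix i assume i: "i \<in> {1..C}"
      have "(\<Sum>n=1..C. p i n) \<noteq> 0" using p_pos[OF i] by simp
      then show "(\<Sum>n=1..C. p i n) *\<^sub>R u (Suc s) i = (\<Sum>n=1..C. p i n *\<^sub>R w s E n)"
        using u_step[OF i] by simp
    qed
    also have "\<dots> = (\<Sum>n=1..C. \<Sum>i=1..C. p i n *\<^sub>R w s E n)" by (rule sum.swap)
    also have "\<dots> = (\<Sum>n=1..C. P n *\<^sub>R w s E n)"
      unfolding P_def scaleR_sum_left[symmetric]
      by (intro sum.cong refl arg_cong2[where f="(*\<^sub>R)"]) (auto intro: sum.cong simp: p_sym)
    also have "\<dots> = (\<Sum>i=1..C. P i) *\<^sub>R (\<Sum>n=1..C. P n *\<^sub>R w s E n)"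
      using p_sum unfolding P_def by simp
    also have "\<dots> = (\<Sum>i=1..C. P i *\<^sub>R w t 0 i)"
      unfolding scaleR_sum_left using w_init unfolding Suc P_def by (intro sum.cong) auto
    finally show ?thesis .
  qed
  show ?thesis
  proof (intro allI impI)
    fix t k
    show "(\<Sum>i=1..C. (\<Sum>n=1..C. p i n) *\<^sub>R (\<beta> *\<^sub>R w t k i + (1 - \<beta>) *\<^sub>R u t i))
      = \<beta> *\<^sub>R (\<Sum>i=1..C. (\<Sum>n=1..C. p i n) *\<^sub>R w t k i)
        + (1 - \<beta>) *\<^sub>R (\<Sum>i=1..C. (\<Sum>n=1..C. p i n) *\<^sub>R w t 0 i)"
    proof -
      have "(\<Sum>i=1..C. P i *\<^sub>R (\<beta> *\<^sub>R w t k i + (1 - \<beta>) *\<^sub>R u t i))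
          = \<beta> *\<^sub>R (\<Sum>i=1..C. P i *\<^sub>R w t k i) + (1 - \<beta>) *\<^sub>R (\<Sum>i=1..C. P i *\<^sub>R u t i)"
        by (simp add: scaleR_right_distrib sum.distrib scaleR_sum_right mult.commute)
      then show ?thesis using key[of t] unfolding P_def by simp
    qed
  qed
qed

end
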